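(* Let $n\in\mathbb{N}$ and $a,b\in\mathbb{C}$ with $b\notin\mathbb{Z}^-$. (i) If $a\neq b+1$, then \[ \sum_{j=0}^{n}\sum_{i=0}^{j}\frac{\binom{n+a+1}{i}}{\binom{n+b}{j}}(-1)^{i-j}=\frac{1}{a-b-1}\left(\frac{(a)_{n+1}}{(b+1)_n}-n-b-1\right); \] in particular for $a=b$ the sum equals $n+1$. (ii) If $a=b+1$, then \[ \sum_{j=0}^{n}\sum_{i=0}^{j}\frac{\binom{n+b+2}{i}}{\binom{n+b}{j}}(-1)^{i-j}=(n+b+1)\big(\psi(n+b+2)-\psi(b+1)\big)=(n+b+1)\sum_{k=1}^{n+1}\frac{1}{b+k}. \]
   Context: For $x\in\mathbb{C}$, $i\in\mathbb{N}$: $\binom{x}{i}=x(x-1)\cdots(x-i+1)/i!$. $\mathbb{Z}^-=\{-1,-2,\dots\}$. Pochhammer symbol: $(\alpha)_0=1$, $(\alpha)_k=\alpha(\alpha+1)\cdots(\alpha+k-1)$. $\psi=\Gamma'/\Gamma$ is the digamma function. *)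

theory Defs
  imports "HOL-Analysis.Analysis"
begin

end

theory Submission imports Defs begin

lemma gch_Suc: "(x::complex) gchoose (Suc k) = (x - of_nat k) / of_nat (Suc k) * (x gchoose k)"
proof -
  have "x * (x gchoose k) = of_nat k * (x gchoose k) + of_nat (Suc k) * (x gchoose (Suc k))"
    by (rule gbinomial_mult_1)
  then have "of_nat (Suc k) * (x gchoose (Suc k)) = (x - of_nat k) * (x gchoose k)"
    by (simp add: algebra_simps)
  then show ?thesis by (simp add: field_simps del: of_nat_Suc)
qed

lemma alt_sum: "(\<Sum>i=0..j. ((A::complex) gchoose i) * (-1) ^ (j - i)) = (A - 1) gchoose j"
proof (induction j)
  case 0 then show ?case by simp
next
  case (Suc j)
  have "(\<Sum>i=0..Suc j. (A gchoose i) * (-1) ^ (Suc j - i))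
      = (\<Sum>i=0..j. (A gchoose i) * (-1) ^ (Suc j - i)) + (A gchoose Suc j)" by simp
  also have "(\<Sum>i=0..j. (A gchoose i) * (-1) ^ (Suc j - i)) = - (\<Sum>i=0..j. (A gchoose i) * (-1) ^ (j - i))"
    by (simp add: sum_negf[symmetric] Suc_diff_le)
  also have "A gchoose Suc j = ((A - 1) + 1) gchoose Suc j" by simp
  also have "\<dots> = ((A-1) gchoose j) + ((A-1) gchoose Suc j)" by (rule gbinomial_Suc_Suc)
  finally show ?case using Suc by simp
qed

lemma telescope:
  fixes x y :: complex
  assumes "\<forall>j\<le>m. y gchoose j \<noteq> 0"
  shows "(x - y - 1) * (\<Sum>j=0..m. (x gchoose j) / (y gchoose j))
     = (x - of_nat m) * (x gchoose m) / (y gchoose m) - (y + 1)"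
  using assms
proof (induction m)
  case 0 then show ?case by (simp add: algebra_simps)
next
  case (Suc m)
  have nz: "y gchoose Suc m \<noteq> 0" "y gchoose m \<noteq> 0" using Suc.prems by auto
  have ym: "y - of_nat m \<noteq> 0" using nz(1) by (simp add: gch_Suc)
  have IH: "(x - y - 1) * (\<Sum>j=0..m. (x gchoose j) / (y gchoose j))
     = (x - of_nat m) * (x gchoose m) / (y gchoose m) - (y + 1)" using Suc by auto
  have key: "(x gchoose Suc m) / (y gchoose Suc m) = (x - of_nat m) / (y - of_nat m) * ((x gchoose m) / (y gchoose m))"
    using ym nz by (simp add: gch_Suc field_simps del: of_nat_Suc)
  define t where "t = (x gchoose m) / (y gchoose m)"
  define S where "S = (\<Sum>j=0..m. (x gchoose j) / (y gchoose j))"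
  have IH': "(x - y - 1) * S = (x - of_nat m) * t - (y + 1)" using IH by (simp add: S_def t_def)
  have "(x - y - 1) * (\<Sum>j=0..Suc m. (x gchoose j) / (y gchoose j))
     = (x - y - 1) * S + (x - y - 1) * ((x - of_nat m) / (y - of_nat m) * t)"
    by (simp add: S_def t_def key distrib_left)
  also have "\<dots> = (x - of_nat (Suc m)) * ((x - of_nat m) / (y - of_nat m) * t) - (y + 1)"
    using ym by (subst IH') (simp add: field_simps)
  also have "(x - of_nat (Suc m)) * ((x - of_nat m) / (y - of_nat m) * t) = (x - of_nat (Suc m)) * ((x gchoose Suc m) / (y gchoose Suc m))"
    by (simp only: key t_def)
  finally show ?case by simp
qed

lemma inner_sum:
  "(\<Sum>i=0..j. ((A::complex) gchoose i) / D * (-1) ^ (j - i)) = ((A - 1) gchoose j) / D"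
proof -
  have "(\<Sum>i=0..j. (A gchoose i) / D * (-1) ^ (j - i)) = (\<Sum>i=0..j. (A gchoose i) * (-1) ^ (j - i)) / D"
    by (simp add: sum_divide_distrib)
  then show ?thesis by (simp add: alt_sum)
qed

lemma digamma_sum:
  fixes b :: complex
  assumes hb: "\<forall>k::nat. k \<ge> 1 \<longrightarrow> b \<noteq> - of_nat k"
  shows "Digamma (b + 1 + of_nat m) - Digamma (b + 1) = (\<Sum>k=1..m. 1 / (b + of_nat k))"
proof (induction m)
  case 0 then show ?case by simp
next
  case (Suc m)
  have nz: "b + 1 + of_nat m \<noteq> 0"
  proof
    assume "b + 1 + of_nat m = 0"
    then have "b = - of_nat (Suc m)" by (simp add: algebra_simps eq_neg_iff_add_eq_0)
    with hb show False by auto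
  qed
  have "Digamma (b + 1 + of_nat (Suc m)) = Digamma ((b + 1 + of_nat m) + 1)" by (simp add: algebra_simps)
  also have "\<dots> = Digamma (b + 1 + of_nat m) + 1 / (b + 1 + of_nat m)" using nz by (rule Digamma_plus1)
  finally show ?case using Suc by (simp add: algebra_simps)
qed

theorem mainTheorem11:
  fixes n :: nat and a b :: complex
  assumes hb: "\<forall>k::nat. k \<ge> 1 \<longrightarrow> b \<noteq> - of_nat k"
  shows "(a \<noteq> b + 1 \<longrightarrow>
           (\<Sum>j=0..n. \<Sum>i=0..j. ((of_nat n + a + 1) gchoose i) / ((of_nat n + b) gchoose j)
                * (-1) ^ (j - i))
           = (1 / (a - b - 1)) * (pochhammer a (n + 1) / pochhammer (b + 1) n - of_nat n - b - 1))
       \<and> (\<Sum>j=0..n. \<Sum>i=0..j. ((of_nat n + b + 1) gchoose i) / ((of_nat n + b) gchoose j)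
                * (-1) ^ (j - i)) = of_nat n + 1
       \<and> (\<Sum>j=0..n. \<Sum>i=0..j. ((of_nat n + b + 2) gchoose i) / ((of_nat n + b) gchoose j)
                * (-1) ^ (j - i))
           = (of_nat n + b + 1) * (Digamma (of_nat n + b + 2) - Digamma (b + 1))
       \<and> (of_nat n + b + 1) * (Digamma (of_nat n + b + 2) - Digamma (b + 1))
           = (of_nat n + b + 1) * (\<Sum>k=1..n+1. 1 / (b + of_nat k))"
proof -
  have nz: "\<forall>j\<le>n. (of_nat n + b) gchoose j \<noteq> 0"
  proof (intro allI impI)
    fix j assume jn: "j \<le> n"
    show "(of_nat n + b) gchoose j \<noteq> 0"
    proof
      assume "(of_nat n + b) gchoose j = 0"
      then have "pochhammer (of_nat n + b - of_nat j + 1) j = 0"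
        by (simp add: gbinomial_pochhammer')
      then obtain k where k: "k < j" "of_nat n + b - of_nat j + 1 = - of_nat k"
        by (auto simp: pochhammer_eq_0_iff)
      have "b = - of_nat (n - j + 1 + k)" using k jn
        by (simp add: of_nat_diff algebra_simps eq_neg_iff_add_eq_0)
      moreover have "b \<noteq> - of_nat (n - j + 1 + k)" using hb[rule_format, of "n - j + 1 + k"] by linarith
      ultimately show False by blast
    qed
  qed
  have pb: "pochhammer (b + 1) n \<noteq> 0"
  proof
    assume "pochhammer (b + 1) n = 0"
    then obtain k where "b + 1 = - of_nat k" by (auto simp: pochhammer_eq_0_iff)
    then have "b = - of_nat (Suc k)" by (simp add: algebra_simps eq_neg_iff_add_eq_0)
    with hb show False by auto
  qed
  have red: "\<And>A. (\<Sum>j=0..n. \<Sum>i=0..j. (A gchoose i) / ((of_nat n + b) gchoose j) * (-1) ^ (j - i))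
      = (\<Sum>j=0..n. ((A - 1) gchoose j) / ((of_nat n + b) gchoose j))"
    by (simp only: inner_sum)
  have P1: "a \<noteq> b + 1 \<longrightarrow>
           (\<Sum>j=0..n. \<Sum>i=0..j. ((of_nat n + a + 1) gchoose i) / ((of_nat n + b) gchoose j)
                * (-1) ^ (j - i))
           = (1 / (a - b - 1)) * (pochhammer a (n + 1) / pochhammer (b + 1) n - of_nat n - b - 1)"
  proof
    assume ab: "a \<noteq> b + 1"
    have ab': "a - b - 1 \<noteq> 0" using ab by (simp add: algebra_simps)
    have T: "((of_nat n + a) - (of_nat n + b) - 1) * (\<Sum>j=0..n. ((of_nat n + a) gchoose j) / ((of_nat n + b) gchoose j))
      = ((of_nat n + a) - of_nat n) * ((of_nat n + a) gchoose n) / ((of_nat n + b) gchoose n) - ((of_nat n + b) + 1)"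
      by (rule telescope[OF nz])
    have Q: "a * ((of_nat n + a) gchoose n) / ((of_nat n + b) gchoose n) = pochhammer a (n + 1) / pochhammer (b + 1) n"
      by (simp add: gbinomial_pochhammer' pochhammer_rec)
    have "(\<Sum>j=0..n. ((of_nat n + a) gchoose j) / ((of_nat n + b) gchoose j))
       = (1 / (a - b - 1)) * (pochhammer a (n + 1) / pochhammer (b + 1) n - of_nat n - b - 1)"
      using T Q ab' by (simp add: field_simps)
    then show "(\<Sum>j=0..n. \<Sum>i=0..j. ((of_nat n + a + 1) gchoose i) / ((of_nat n + b) gchoose j)
                * (-1) ^ (j - i))
           = (1 / (a - b - 1)) * (pochhammer a (n + 1) / pochhammer (b + 1) n - of_nat n - b - 1)"
      unfolding red by simp
  qed
  have P2: "(\<Sum>j=0..n. \<Sum>i=0..j. ((of_nat n + b + 1) gchoose i) / ((of_nat n + b) gchoose j)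
                * (-1) ^ (j - i)) = of_nat n + 1"
  proof -
    have "(\<Sum>j=0..n. ((of_nat n + b) gchoose j) / ((of_nat n + b) gchoose j)) = (\<Sum>j=0..n. (1::complex))"
      using nz by (intro sum.cong) auto
    then show ?thesis unfolding red by simp
  qed
  have ratio: "\<And>j. j \<le> n \<Longrightarrow> ((of_nat n + b + 1) gchoose j) / ((of_nat n + b) gchoose j)
       = (of_nat n + b + 1) * (1 / (b + of_nat (n + 1 - j)))"
  proof -
    fix j assume jn: "j \<le> n"
    have d: "b + of_nat (n + 1 - j) \<noteq> 0"
    proof
      assume "b + of_nat (n + 1 - j) = 0"
      then have "b = - of_nat (n + 1 - j)" by (simp add: eq_neg_iff_add_eq_0)
      moreover have "b \<noteq> - of_nat (n + 1 - j)" using hb[rule_format, of "n + 1 - j"] jn by linarith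
      ultimately show False by blast
    qed
    have e: "b + of_nat (n + 1 - j) = (of_nat n + b + 1) - of_nat j" using jn by (simp add: of_nat_diff)
    have "((of_nat n + b + 1) - of_nat j) * ((of_nat n + b + 1) gchoose j) = (of_nat n + b + 1) * (((of_nat n + b + 1) - 1) gchoose j)"
      by (rule gbinomial_absorb_comp)
    then have "(b + of_nat (n + 1 - j)) * ((of_nat n + b + 1) gchoose j) = (of_nat n + b + 1) * ((of_nat n + b) gchoose j)"
      by (simp only: e add_diff_cancel_right')
    then show "((of_nat n + b + 1) gchoose j) / ((of_nat n + b) gchoose j)
       = (of_nat n + b + 1) * (1 / (b + of_nat (n + 1 - j)))"
      using d nz jn by (simp add: field_simps)
  qed
  have reidx: "(\<Sum>j=0..n. 1 / (b + of_nat (n + 1 - j))) = (\<Sum>k=1..n+1. 1 / (b + of_nat k))"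
    by (rule sum.reindex_bij_witness[of _ "\<lambda>k. n + 1 - k" "\<lambda>j. n + 1 - j"]) auto
  have S3: "(\<Sum>j=0..n. \<Sum>i=0..j. ((of_nat n + b + 2) gchoose i) / ((of_nat n + b) gchoose j)
                * (-1) ^ (j - i)) = (of_nat n + b + 1) * (\<Sum>k=1..n+1. 1 / (b + of_nat k))"
  proof -
    have "(\<Sum>j=0..n. \<Sum>i=0..j. ((of_nat n + b + 2) gchoose i) / ((of_nat n + b) gchoose j)
                * (-1) ^ (j - i)) = (\<Sum>j=0..n. ((of_nat n + b + 1) gchoose j) / ((of_nat n + b) gchoose j))"
      unfolding red by (simp add: algebra_simps)
    also have "\<dots> = (\<Sum>j=0..n. (of_nat n + b + 1) * (1 / (b + of_nat (n + 1 - j))))"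
      by (intro sum.cong) (auto simp: ratio)
    also have "\<dots> = (of_nat n + b + 1) * (\<Sum>k=1..n+1. 1 / (b + of_nat k))"
      by (simp only: sum_distrib_left[symmetric] reidx)
    finally show ?thesis .
  qed
  have D: "Digamma (of_nat n + b + 2) - Digamma (b + 1) = (\<Sum>k=1..n+1. 1 / (b + of_nat k))"
  proof -
    have "of_nat n + b + 2 = b + 1 + of_nat (n + 1)" by (simp add: algebra_simps)
    then show ?thesis using digamma_sum[OF hb, of "n+1"] by (simp only:)
  qed
  show ?thesis using P1 P2 S3 D by simp
qed

end
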